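(* Let $H$ be a self-adjoint operator on a finite-dimensional Hilbert space $\mathcal{H}$ which is not the zero operator, and let $T:\mathcal{H}\rightarrow\mathcal{H}$ be an antiunitary bijection. Suppose there exists an eigenvector $\psi$ of $H$ such that (1) $T\psi \neq e^{i\theta}\psi$ for every complex unit $e^{i\theta}$, and (2) every eigenvector of $H$ orthogonal to $\psi$ has an eigenvalue different from that of $\psi$. Then $[T,H]\neq 0$, i.e. $TH\neq HT$.
   Context: An antiunitary operator $T$ is an antilinear bijection ($T(a\psi+b\phi)=a^*T\psi+b^*T\phi$) satisfying $\langle T\psi, T\phi\rangle = \langle \psi,\phi\rangle^*$ for all $\psi,\phi$. *)

theory Defs
  imports "HOL-Analysis.Analysis"
begin

text \<open>A finite-dimensional complex Hilbert space is modelled (up to unitary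
isomorphism) as \<open>complex ^ 'n\<close> for a finite index type \<open>'n\<close>, with the standard
inner product, conjugate-linear in the first argument.\<close>

definition cinner :: "complex ^ 'n \<Rightarrow> complex ^ 'n \<Rightarrow> complex" where
  "cinner x y = (\<Sum>i\<in>UNIV. cnj (x $ i) * y $ i)"

definition clinear_op :: "(complex ^ 'n \<Rightarrow> complex ^ 'n) \<Rightarrow> bool" where
  "clinear_op A \<longleftrightarrow> (\<forall>a b x y. A (a *s x + b *s y) = a *s A x + b *s A y)"

definition self_adjoint :: "(complex ^ 'n \<Rightarrow> complex ^ 'n) \<Rightarrow> bool" where
  "self_adjoint H \<longleftrightarrow> clinear_op H \<and> (\<forall>x y. cinner (H x) y = cinner x (H y))"

definition antiunitary :: "(complex ^ 'n \<Rightarrow> complex ^ 'n) \<Rightarrow> bool" where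
  "antiunitary T \<longleftrightarrow> bij T
     \<and> (\<forall>a b x y. T (a *s x + b *s y) = cnj a *s T x + cnj b *s T y)
     \<and> (\<forall>x y. cinner (T x) (T y) = cnj (cinner x y))"

definition is_eigenvector :: "(complex ^ 'n \<Rightarrow> complex ^ 'n) \<Rightarrow> complex ^ 'n \<Rightarrow> complex \<Rightarrow> bool" where
  "is_eigenvector H v l \<longleftrightarrow> v \<noteq> 0 \<and> H v = l *s v"

end

theory Submission
  imports Defs
begin

lemma cinner_scale_right: "cinner x (a *s y) = a * cinner x y"
  by (simp add: cinner_def sum_distrib_left algebra_simps)

lemma cinner_scale_left: "cinner (a *s x) y = cnj a * cinner x y"
  by (simp add: cinner_def sum_distrib_left algebra_simps)

lemma cinner_diff_right: "cinner x (y - z) = cinner x y - cinner x z"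
  by (simp add: cinner_def sum_subtractf algebra_simps)

lemma cinner_self_real: "cinner x x = of_real (\<Sum>i\<in>UNIV. (cmod (x $ i))^2)"
  unfolding cinner_def of_real_sum
  by (rule sum.cong) (simp_all, metis complex_norm_square mult.commute of_real_power)

lemma cinner_self_zero: "cinner x x = 0 \<longleftrightarrow> x = 0"
proof
  assume "cinner x x = 0"
  then have "(\<Sum>i\<in>UNIV. (cmod (x $ i))^2) = 0" by (metis cinner_self_real of_real_eq_0_iff)
  then have "\<forall>i\<in>UNIV. (cmod (x $ i))^2 = 0"
    by (subst (asm) sum_nonneg_eq_0_iff) auto
  then show "x = 0" by (simp add: vec_eq_iff)
qed (simp add: cinner_def)

lemma lin_scale: "clinear_op H \<Longrightarrow> H (a *s x) = a *s H x"
  unfolding clinear_op_def by (metis add.right_neutral vector_smult_lzero)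

lemma lin_diff: "clinear_op H \<Longrightarrow> H (x - c *s y) = H x - c *s H y"
proof -
  assume h: "clinear_op H"
  have "x - c *s y = 1 *s x + (-c) *s y" by (simp add: vector_smult_lneg)
  moreover have "H (1 *s x + (-c) *s y) = 1 *s H x + (-c) *s H y"
    using h unfolding clinear_op_def by blast
  ultimately show ?thesis by (simp add: vector_smult_lneg)
qed

theorem proposition2:
  fixes H T :: "complex ^ 'n \<Rightarrow> complex ^ 'n" and \<psi> :: "complex ^ 'n" and l :: complex
  assumes "self_adjoint H"
    and "H \<noteq> (\<lambda>x. 0)"
    and "antiunitary T"
    and "is_eigenvector H \<psi> l"
    and "\<forall>\<theta>::real. T \<psi> \<noteq> exp (\<i> * complex_of_real \<theta>) *s \<psi>"
    and "\<forall>\<phi> \<mu>. is_eigenvector H \<phi> \<mu> \<and> cinner \<psi> \<phi> = 0 \<longrightarrow> \<mu> \<noteq> l"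
  shows "T \<circ> H \<noteq> H \<circ> T"
proof
  assume comm: "T \<circ> H = H \<circ> T"
  have lin: "clinear_op H" and sa: "\<And>x y. cinner (H x) y = cinner x (H y)"
    using assms(1) unfolding self_adjoint_def by auto
  have Tlin: "\<And>a b x y. T (a *s x + b *s y) = cnj a *s T x + cnj b *s T y"
    and Tin: "\<And>x y. cinner (T x) (T y) = cnj (cinner x y)"
    using assms(3) unfolding antiunitary_def by auto
  have psi0: "\<psi> \<noteq> 0" and Hpsi: "H \<psi> = l *s \<psi>"
    using assms(4) unfolding is_eigenvector_def by auto
  have pp: "cinner \<psi> \<psi> \<noteq> 0" using psi0 cinner_self_zero by blast
  have "cinner (H \<psi>) \<psi> = cinner \<psi> (H \<psi>)" by (rule sa)
  then have "cnj l * cinner \<psi> \<psi> = l * cinner \<psi> \<psi>"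
    by (simp add: Hpsi cinner_scale_left cinner_scale_right)
  then have lreal: "cnj l = l" using pp by simp
  have THpsi: "H (T \<psi>) = l *s T \<psi>"
  proof -
    have "H (T \<psi>) = T (H \<psi>)" using comm by (metis comp_apply)
    also have "\<dots> = T (l *s \<psi> + 0 *s \<psi>)" by (simp add: Hpsi)
    also have "\<dots> = cnj l *s T \<psi>" by (simp only: Tlin) simp
    finally show ?thesis using lreal by simp
  qed
  define c where "c = cinner \<psi> (T \<psi>) / cinner \<psi> \<psi>"
  define \<phi> where "\<phi> = T \<psi> - c *s \<psi>"
  have orth: "cinner \<psi> \<phi> = 0"
    using pp by (simp add: \<phi>_def cinner_diff_right cinner_scale_right c_def)
  have Hphi: "H \<phi> = l *s \<phi>"
    by (simp add: \<phi>_def lin_diff[OF lin] THpsi Hpsi vector_smult_assoc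
        vector_ssub_ldistrib mult.commute)
  have "\<phi> = 0" using assms(6) orth Hphi unfolding is_eigenvector_def by blast
  then have Tc: "T \<psi> = c *s \<psi>" by (simp add: \<phi>_def)
  have "cinner (T \<psi>) (T \<psi>) = cnj (cinner \<psi> \<psi>)" by (rule Tin)
  also have "cnj (cinner \<psi> \<psi>) = cinner \<psi> \<psi>"
    by (simp add: cinner_self_real)
  finally have "c * cnj c = 1"
    using pp by (simp add: Tc cinner_scale_left cinner_scale_right)
  then have "complex_of_real ((cmod c)^2) = 1" by (simp only: complex_norm_square)
  then have "(cmod c)^2 = 1" by (simp only: of_real_eq_1_iff)
  then have "cmod c = 1" using norm_ge_zero[of c] by (auto simp add: power2_eq_1_iff)
  then have "c = exp (\<i> * complex_of_real (Arg c))"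
    by (metis cis_conv_exp rcis_cmod_Arg rcis_def mult_1 of_real_1)
  then show False using assms(5) Tc by metis
qed

end
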